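(* The vector fields $Y^n_1,\dots,Y^n_{n-1}$ have polynomial coefficients, are Lie symmetries of the ladder system, are linearly independent over $\mathbf{C}$, and pairwise commute; thus they span an $(n-1)$-dimensional Abelian Lie algebra of polynomial Lie symmetries of the ladder system (so the ladder system is integrable by quadrature).
   Context: Coordinates $x=(x_1,\dots,x_n)\in\mathbf{C}^n$, $n\ge2$. The ladder system is the HLV system $\dot x_i = x_i\sum_{j=1}^n (1+i-j)x_j$, identified with the vector field $X_f=\sum_i x_i\big(\sum_j (1+i-j)x_j\big)\partial/\partial x_i$. A vector field $X$ is a Lie symmetry if $[X_f,X]=0$. Notation: $u=\sum_{j=1}^n x_j$, $D=\sum_{j=1}^n x_j\,\partial/\partial x_j$, and $Y^l_m = x_m u^{l-m-1}\big(D-u\,\partial/\partial x_l\big)$ for $l,m\in\{1,\dots,n\}$. *)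

theory Defs
  imports "HOL-Analysis.Analysis"
begin

text \<open>Points of C^n are modelled as functions x :: nat => complex, of which only the
coordinates x 1, ..., x n are used.  A vector field on C^n is a function
V :: nat => (nat => complex) => complex, where V i is the coefficient of d/dx_i
(only i in {1..n} is relevant).\<close>

type_synonym pt = "nat \<Rightarrow> complex"
type_synonym vfield = "nat \<Rightarrow> pt \<Rightarrow> complex"

inductive poly_fun :: "nat \<Rightarrow> (pt \<Rightarrow> complex) \<Rightarrow> bool" for n :: nat where
  pf_const: "poly_fun n (\<lambda>x. c)"
| pf_var: "j \<in> {1..n} \<Longrightarrow> poly_fun n (\<lambda>x. x j)"
| pf_add: "poly_fun n f \<Longrightarrow> poly_fun n g \<Longrightarrow> poly_fun n (\<lambda>x. f x + g x)"
| pf_mult: "poly_fun n f \<Longrightarrow> poly_fun n g \<Longrightarrow> poly_fun n (\<lambda>x. f x * g x)"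

definition pdiff :: "nat \<Rightarrow> (pt \<Rightarrow> complex) \<Rightarrow> pt \<Rightarrow> complex" where
  "pdiff j f x = deriv (\<lambda>t. f (x(j := t))) (x j)"

definition lie_bracket :: "nat \<Rightarrow> vfield \<Rightarrow> vfield \<Rightarrow> vfield" where
  "lie_bracket n X Y i x = (\<Sum>j=1..n. X j x * pdiff j (Y i) x - Y j x * pdiff j (X i) x)"

definition commute :: "nat \<Rightarrow> vfield \<Rightarrow> vfield \<Rightarrow> bool" where
  "commute n X Y \<longleftrightarrow> (\<forall>i\<in>{1..n}. \<forall>x. lie_bracket n X Y i x = 0)"

definition polynomial_vfield :: "nat \<Rightarrow> vfield \<Rightarrow> bool" where
  "polynomial_vfield n V \<longleftrightarrow> (\<forall>i\<in>{1..n}. poly_fun n (V i))"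

definition usum :: "nat \<Rightarrow> pt \<Rightarrow> complex" where
  "usum n x = (\<Sum>j=1..n. x j)"

definition ladder :: "nat \<Rightarrow> vfield" where
  "ladder n i x = x i * (\<Sum>j=1..n. of_int (1 + int i - int j) * x j)"

text \<open>Y^l_m = x_m u^(l-m-1) (D - u d/dx_l), where D = sum_j x_j d/dx_j
  (used only for m < l, so that the exponent is a natural number).\<close>
definition Yf :: "nat \<Rightarrow> nat \<Rightarrow> nat \<Rightarrow> vfield" where
  "Yf n l m i x = x m * usum n x ^ (l - m - 1) *
      (x i - usum n x * (if i = l then 1 else 0))"

definition lin_indep_vfields :: "nat \<Rightarrow> nat \<Rightarrow> (nat \<Rightarrow> vfield) \<Rightarrow> bool" where
  "lin_indep_vfields n k V \<longleftrightarrow>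
     (\<forall>c :: nat \<Rightarrow> complex.
        (\<forall>i\<in>{1..n}. \<forall>x. (\<Sum>m=1..k. c m * V m i x) = 0) \<longrightarrow> (\<forall>m\<in>{1..k}. c m = 0))"

end

theory Submission
  imports Defs
begin

lemma upd_lin:
  fixes x :: pt and c :: "nat \<Rightarrow> complex"
  shows "(\<Sum>k=1..n. c k * (x(j:=t)) k) = (\<Sum>k=1..n. c k * x k) + (if j\<in>{1..n} then c j * (t - x j) else 0)"
proof -
  have "(\<Sum>k=1..n. c k * (x(j:=t)) k) = (\<Sum>k=1..n. c k * x k + (if k = j then c j * (t - x j) else 0))"
    by (rule sum.cong) (auto simp: right_diff_distrib)
  then show ?thesis by (simp add: sum.distrib right_diff_distrib)
qed

lemma d_lin:
  fixes x :: pt and c :: "nat \<Rightarrow> complex"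
  shows "((\<lambda>t. \<Sum>k=1..n. c k * (x(j:=t)) k) has_field_derivative (if j\<in>{1..n} then c j else 0)) (at s)"
  unfolding upd_lin
  by (cases "j\<in>{1..n}") (auto intro!: derivative_eq_intros)

lemma usum_lin: "usum n x = (\<Sum>k=1..n. 1 * x k)"
  by (simp add: usum_def)

definition wsum :: "nat \<Rightarrow> pt \<Rightarrow> complex" where
  "wsum n x = (\<Sum>k=1..n. of_nat k * x k)"

lemma d_usum: "j \<in> {1..n} \<Longrightarrow> ((\<lambda>t. usum n (x(j:=t))) has_field_derivative 1) (at s)"
  unfolding usum_lin using d_lin[where c="\<lambda>_. 1" and n=n and x=x and j=j and s=s] by simp

lemma d_wsum: "j \<in> {1..n} \<Longrightarrow> ((\<lambda>t. wsum n (x(j:=t))) has_field_derivative of_nat j) (at s)"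
  unfolding wsum_def using d_lin[where c="of_nat" and n=n and x=x and j=j and s=s] by simp

lemma d_coord: "((\<lambda>t. (x(j:=t)) k) has_field_derivative (if k = j then 1 else 0)) (at s)"
  by (cases "k = j") (auto intro!: derivative_eq_intros)

lemma ladder_alt: "ladder n i x = x i * ((1 + of_nat i) * usum n x - wsum n x)"
proof -
  have "(\<Sum>j=1..n. of_int (1 + int i - int j) * x j) = (\<Sum>j=1..n. (1 + of_nat i) * x j - of_nat j * x j)"
    by (rule sum.cong) (auto simp: algebra_simps)
  also have "\<dots> = (1 + of_nat i) * usum n x - wsum n x"
    by (simp add: sum_subtractf sum_distrib_left usum_def wsum_def)
  finally show ?thesis by (simp add: ladder_def)
qed

lemma pdiff_ladder:
  assumes "j \<in> {1..n}"
  shows "pdiff j (ladder n i) x = (if i = j then (1 + of_nat i) * usum n x - wsum n x else 0)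
     + x i * (1 + of_nat i - of_nat j)"
proof -
  have "((\<lambda>t. (x(j:=t)) i * ((1 + of_nat i) * usum n (x(j:=t)) - wsum n (x(j:=t)))) has_field_derivative
     (if i = j then 1 else 0) * ((1 + of_nat i) * usum n x - wsum n x) + x i * ((1 + of_nat i) * 1 - of_nat j)) (at (x j))"
    using d_coord[of x j i "x j"] d_usum[OF assms, of x "x j"] d_wsum[OF assms, of x "x j"]
    by (auto intro!: derivative_eq_intros)
  then show ?thesis unfolding pdiff_def ladder_alt
    by (subst DERIV_imp_deriv) (auto simp: algebra_simps)
qed

lemma pdiff_Y:
  assumes "j \<in> {1..n}"
  shows "pdiff j (Yf n l m i) x =
    (if j = m then usum n x ^ (l-m-1) * (x i - usum n x * (if i = l then 1 else 0)) else 0)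
    + x m * (of_nat (l-m-1) * usum n x ^ (l-m-1-1)) * (x i - usum n x * (if i = l then 1 else 0))
    + x m * usum n x ^ (l-m-1) * ((if i = j then 1 else 0) - (if i = l then 1 else 0))"
proof -
  have "((\<lambda>t. (x(j:=t)) m * usum n (x(j:=t)) ^ (l-m-1) * ((x(j:=t)) i - usum n (x(j:=t)) * (if i = l then 1 else 0))) has_field_derivative
    ((if m = j then 1 else 0) * usum n x ^ (l-m-1) * (x i - usum n x * (if i = l then 1 else 0))
    + x m * (of_nat (l-m-1) * usum n x ^ (l-m-1-1) * 1) * (x i - usum n x * (if i = l then 1 else 0))
    + x m * usum n x ^ (l-m-1) * ((if i = j then 1 else 0) - 1 * (if i = l then 1 else 0)))) (at (x j))"
    using d_coord[of x j i "x j"] d_coord[of x j m "x j"] d_usum[OF assms, of x "x j"]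
    by (auto intro!: derivative_eq_intros simp: algebra_simps)
  then show ?thesis unfolding pdiff_def Yf_def
    by (subst DERIV_imp_deriv) (auto simp: algebra_simps)
qed

lemma sum_pattern:
  fixes f :: "nat \<Rightarrow> complex"
  assumes "finite A" "m \<in> A" "i \<in> A"
  shows "(\<Sum>j\<in>A. f j * ((if j = m then \<alpha> else 0) + \<beta> + \<gamma> * ((if i = j then 1 else 0) - \<delta>)))
    = f m * \<alpha> + \<beta> * sum f A + \<gamma> * (f i - \<delta> * sum f A)"
proof -
  have "(\<Sum>j\<in>A. f j * ((if j = m then \<alpha> else 0) + \<beta> + \<gamma> * ((if i = j then 1 else 0) - \<delta>)))
    = (\<Sum>j\<in>A. (if j = m then f j * \<alpha> else 0) + \<beta> * f j + (if j = i then \<gamma> * f j else 0) - \<gamma> * \<delta> * f j)"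
    by (rule sum.cong) (auto simp: algebra_simps)
  also have "\<dots> = f m * \<alpha> + \<beta> * sum f A + \<gamma> * f i - \<gamma> * \<delta> * sum f A"
    using assms by (simp add: sum.distrib sum_subtractf sum_distrib_left)
  finally show ?thesis by (simp add: algebra_simps)
qed

lemma sum_pattern2:
  fixes f :: "nat \<Rightarrow> complex"
  assumes "finite A" "i \<in> A"
  shows "(\<Sum>j\<in>A. f j * ((if i = j then a else 0) + b * (1 + of_nat i - of_nat j)))
    = f i * a + b * (\<Sum>j\<in>A. f j * (1 + of_nat i - of_nat j))"
proof -
  have "(\<Sum>j\<in>A. f j * ((if i = j then a else 0) + b * (1 + of_nat i - of_nat j)))
    = (\<Sum>j\<in>A. (if j = i then f j * a else 0) + b * (f j * (1 + of_nat i - of_nat j)))"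
    by (rule sum.cong) (auto simp: algebra_simps)
  also have "\<dots> = f i * a + b * (\<Sum>j\<in>A. f j * (1 + of_nat i - of_nat j))"
    using assms by (simp add: sum.distrib sum_distrib_left)
  finally show ?thesis .
qed

lemma sum_ladder: "(\<Sum>j=1..n. ladder n j x) = usum n x ^ 2"
proof -
  have "(\<Sum>j=1..n. ladder n j x) = (\<Sum>j=1..n. usum n x * x j + usum n x * (of_nat j * x j) - wsum n x * x j)"
    by (rule sum.cong) (auto simp: ladder_alt algebra_simps)
  also have "\<dots> = usum n x * usum n x + usum n x * wsum n x - wsum n x * usum n x"
    by (simp add: sum.distrib sum_subtractf sum_distrib_left[symmetric] usum_def wsum_def)
  finally show ?thesis by (simp add: power2_eq_square)
qed

lemma sum_Y: assumes "l \<in> {1..n}" shows "(\<Sum>j=1..n. Yf n l m j x) = 0"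
proof -
  have "(\<Sum>j=1..n. Yf n l m j x) = (\<Sum>j=1..n. x m * usum n x ^ (l-m-1) * x j
      - (if j = l then x m * usum n x ^ (l-m-1) * usum n x else 0))"
    by (rule sum.cong) (auto simp: Yf_def algebra_simps)
  also have "\<dots> = x m * usum n x ^ (l-m-1) * usum n x - x m * usum n x ^ (l-m-1) * usum n x"
    using assms by (simp add: sum_subtractf sum_distrib_left[symmetric] usum_def)
  finally show ?thesis by simp
qed

lemma sum_Yw: assumes "l \<in> {1..n}"
  shows "(\<Sum>j=1..n. Yf n l m j x * (1 + of_nat i - of_nat j)) =
    x m * usum n x ^ (l-m-1) * ((1 + of_nat i) * usum n x - wsum n x - usum n x * (1 + of_nat i - of_nat l))"
proof -
  let ?P = "x m * usum n x ^ (l-m-1)"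
  have "(\<Sum>j=1..n. Yf n l m j x * (1 + of_nat i - of_nat j)) = (\<Sum>j=1..n. ?P * (1 + of_nat i) * x j
      - ?P * (of_nat j * x j) - (if j = l then ?P * usum n x * (1 + of_nat i - of_nat j) else 0))"
    by (rule sum.cong) (auto simp: Yf_def algebra_simps)
  also have "\<dots> = ?P * (1 + of_nat i) * usum n x - ?P * wsum n x - ?P * usum n x * (1 + of_nat i - of_nat l)"
    using assms by (simp add: sum_subtractf sum_distrib_left[symmetric] usum_def wsum_def)
  finally show ?thesis by (simp add: algebra_simps)
qed

lemma bracket_ladder_Y:
  assumes m: "m \<in> {1..n-1}" and i: "i \<in> {1..n}"
  shows "lie_bracket n (ladder n) (Yf n n m) i x = 0"
proof -
  define U where "U = usum n x"
  define W where "W = wsum n x"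
  define K where "K = n - m - 1"
  define Z where "Z = x i - U * (if i = n then 1 else 0)"
  have mA: "m \<in> {1..n}" using m by auto
  have nA: "n \<in> {1..n}" using m by auto
  have "lie_bracket n (ladder n) (Yf n n m) i x =
     (\<Sum>j=1..n. ladder n j x * pdiff j (Yf n n m i) x) - (\<Sum>j=1..n. Yf n n m j x * pdiff j (ladder n i) x)"
    by (simp add: lie_bracket_def sum_subtractf)
  also have "(\<Sum>j=1..n. ladder n j x * pdiff j (Yf n n m i) x) =
     (\<Sum>j=1..n. ladder n j x * ((if j = m then U ^ K * Z else 0) + x m * (of_nat K * U ^ (K-1)) * Z
        + x m * U ^ K * ((if i = j then 1 else 0) - (if i = n then 1 else 0))))"
    by (rule sum.cong) (auto simp: pdiff_Y U_def K_def Z_def)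
  also have "\<dots> = ladder n m x * (U ^ K * Z) + x m * (of_nat K * U ^ (K-1)) * Z * U^2
      + x m * U ^ K * (ladder n i x - (if i = n then 1 else 0) * U^2)"
    using sum_pattern[OF finite_atLeastAtMost mA i, of "\<lambda>j. ladder n j x"] sum_ladder[of n x]
    unfolding U_def by (simp only:)
  also have "(\<Sum>j=1..n. Yf n n m j x * pdiff j (ladder n i) x) =
     (\<Sum>j=1..n. Yf n n m j x * ((if i = j then (1 + of_nat i) * U - W else 0) + x i * (1 + of_nat i - of_nat j)))"
    by (rule sum.cong) (auto simp: pdiff_ladder U_def W_def)
  also have "\<dots> = Yf n n m i x * ((1 + of_nat i) * U - W) + x i * (x m * U ^ K * ((1 + of_nat i) * U - W - U * (1 + of_nat i - of_nat n)))"
    using sum_pattern2[OF finite_atLeastAtMost i, of "\<lambda>j. Yf n n m j x"] sum_Yw[OF nA, of m x i]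
    unfolding U_def W_def K_def by (simp only:)
  finally have eq: "lie_bracket n (ladder n) (Yf n n m) i x = 
      ladder n m x * (U ^ K * Z) + x m * (of_nat K * U ^ (K-1)) * Z * U^2
      + x m * U ^ K * (ladder n i x - (if i = n then 1 else 0) * U^2) -
      (Yf n n m i x * ((1 + of_nat i) * U - W) + x i * (x m * U ^ K * ((1 + of_nat i) * U - W - U * (1 + of_nat i - of_nat n))))" .
  have KK: "of_nat K * U ^ (K-1) * U^2 = of_nat K * U^K * U"
    by (cases K) (auto simp: power2_eq_square)
  have Kn: "(of_nat K :: complex) = of_nat n - of_nat m - 1"
  proof -
    have "K + m + 1 = n" using m by (auto simp: K_def)
    then have "(of_nat (K + m + 1) :: complex) = of_nat n" by simp
    then show ?thesis by (simp add: algebra_simps)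
  qed
  have Y: "Yf n n m i x = x m * U ^ K * Z" by (simp add: Yf_def U_def K_def Z_def)
  have La: "ladder n m x = x m * ((1 + of_nat m) * U - W)" "ladder n i x = x i * ((1 + of_nat i) * U - W)"
    by (simp_all add: ladder_alt U_def W_def)
  have "lie_bracket n (ladder n) (Yf n n m) i x = 
      x m * U ^ K * (Z * ((1 + of_nat m) * U - W) + of_nat K * U * Z
      + (x i * ((1 + of_nat i) * U - W) - (if i = n then 1 else 0) * U^2) -
      (Z * ((1 + of_nat i) * U - W) + x i * ((1 + of_nat i) * U - W - U * (1 + of_nat i - of_nat n))))"
    using KK unfolding eq Y La by (simp add: algebra_simps) blast
  also have "\<dots> = 0"
    unfolding Kn Z_def by (cases "i = n") (auto simp: algebra_simps power2_eq_square)
  finally show ?thesis .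
qed

lemma bracket_Y_Y:
  assumes a: "a \<in> {1..n-1}" and b: "b \<in> {1..n-1}" and i: "i \<in> {1..n}"
  shows "lie_bracket n (Yf n n a) (Yf n n b) i x = 0"
proof -
  define U where "U = usum n x"
  define Z where "Z = x i - U * (if i = n then 1 else 0)"
  have aA: "a \<in> {1..n}" using a by auto
  have bA: "b \<in> {1..n}" using b by auto
  have nA: "n \<in> {1..n}" using a by auto
  have gen: "(\<Sum>j=1..n. Yf n n c j x * pdiff j (Yf n n d i) x) = 2 * (x c * U ^ (n-c-1)) * (x d * U ^ (n-d-1)) * Z"
    if c: "c \<in> {1..n-1}" and d: "d \<in> {1..n-1}" for c d
  proof -
    have cA: "c \<in> {1..n}" "d \<in> {1..n}" using c d by auto
    have "(\<Sum>j=1..n. Yf n n c j x * pdiff j (Yf n n d i) x) =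
     (\<Sum>j=1..n. Yf n n c j x * ((if j = d then U ^ (n-d-1) * Z else 0) + x d * (of_nat (n-d-1) * U ^ (n-d-1-1)) * Z
        + x d * U ^ (n-d-1) * ((if i = j then 1 else 0) - (if i = n then 1 else 0))))"
      by (rule sum.cong) (auto simp: pdiff_Y U_def Z_def)
    also have "\<dots> = Yf n n c d x * (U ^ (n-d-1) * Z) + x d * U ^ (n-d-1) * Yf n n c i x"
      using sum_pattern[OF finite_atLeastAtMost cA(2) i, of "\<lambda>j. Yf n n c j x"] sum_Y[OF nA, of c x]
      by simp
    also have "\<dots> = 2 * (x c * U ^ (n-c-1)) * (x d * U ^ (n-d-1)) * Z"
      using d by (auto simp: Yf_def U_def Z_def algebra_simps)
    finally show ?thesis .
  qed
  show ?thesis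
    using gen[OF a b] gen[OF b a]
    by (simp add: lie_bracket_def sum_subtractf algebra_simps)
qed

lemma pf_diff: "poly_fun n f \<Longrightarrow> poly_fun n g \<Longrightarrow> poly_fun n (\<lambda>x. f x - g x)"
proof -
  assume "poly_fun n f" "poly_fun n g"
  then have "poly_fun n (\<lambda>x. f x + (\<lambda>x. -1) x * g x)"
    by (intro pf_add pf_mult pf_const)
  then show ?thesis by simp
qed

lemma pf_pow: "poly_fun n f \<Longrightarrow> poly_fun n (\<lambda>x. f x ^ k)"
proof (induction k)
  case 0 then show ?case using pf_const[of n 1] by simp
next
  case (Suc k)
  then have "poly_fun n (\<lambda>x. f x * f x ^ k)" by (intro pf_mult)
  then show ?case by simp
qed

lemma pf_usum: "poly_fun n (usum n)"
proof -
  have "poly_fun n (\<lambda>x. \<Sum>j\<in>A. x j)" if "A \<subseteq> {1..n}" for A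
    using that
  proof (induction A rule: infinite_finite_induct)
    case (infinite A) then show ?case using pf_const[of n 0] by simp
  next
    case empty then show ?case using pf_const[of n 0] by simp
  next
    case (insert a A)
    then have "poly_fun n (\<lambda>x. x a + (\<Sum>j\<in>A. x j))" by (intro pf_add pf_var) auto
    then show ?case using insert by simp
  qed
  then show ?thesis unfolding usum_def[abs_def] by simp
qed

lemma poly_Y:
  assumes m: "m \<in> {1..n}" and i: "i \<in> {1..n}"
  shows "poly_fun n (Yf n l m i)"
proof -
  have "poly_fun n (\<lambda>x. (x m * usum n x ^ (l-m-1)) * (x i - usum n x * (\<lambda>x. if i = l then 1 else 0) x))"
    by (intro pf_mult pf_diff pf_var pf_pow pf_usum pf_const m i)
  then show ?thesis by (simp add: Yf_def[abs_def])
qed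

lemma lin_indep:
  assumes n: "n \<ge> 2"
  shows "lin_indep_vfields n (n-1) (\<lambda>m. Yf n n m)"
  unfolding lin_indep_vfields_def
proof (intro allI impI ballI)
  fix c :: "nat \<Rightarrow> complex" and m
  assume H: "\<forall>i\<in>{1..n}. \<forall>x. (\<Sum>m=1..n-1. c m * Yf n n m i x) = 0"
  assume m: "m \<in> {1..n-1}"
  have 1: "1 \<in> {1..n}" using n by auto
  define pt :: "complex \<Rightarrow> nat \<Rightarrow> pt" where
    "pt s k = (\<lambda>j. (if j = 1 then 1 else 0) + (if j = k then s else 0) - (if j = n then s else 0))" for s k
  have key: "c 1 + c k * s = 0" if k: "k \<in> {2..n-1}" for k s
  proof -
    have u: "usum n (pt s k) = 1"
      using k n by (auto simp: usum_def pt_def sum.distrib sum_subtractf)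
    have "(\<Sum>m=1..n-1. c m * Yf n n m 1 (pt s k)) = (\<Sum>m=1..n-1. c m * pt s k m)"
    proof (rule sum.cong)
      fix m assume "m \<in> {1..n-1}"
      have p1: "pt s k 1 = 1" using k n by (simp add: pt_def)
      show "c m * Yf n n m 1 (pt s k) = c m * pt s k m"
        using n p1 by (simp add: Yf_def u)
    qed simp
    also have "\<dots> = (\<Sum>m=1..n-1. (if m = 1 then c m else 0) + (if m = k then c m * s else 0) - (if m = n then c m * s else 0))"
      by (rule sum.cong) (auto simp: pt_def algebra_simps)
    also have "\<dots> = c 1 + c k * s"
      using k n by (simp add: sum.distrib sum_subtractf)
    finally show ?thesis using H 1 by auto
  qed
  have c1: "c 1 = 0"
  proof -
    have "(\<Sum>m=1..n-1. c m * Yf n n m 1 (\<lambda>j. if j = 1 then 1 else 0)) = (\<Sum>m=1..n-1. (if m = 1 then c m else 0))"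
      by (rule sum.cong) (use n in \<open>auto simp: Yf_def usum_def\<close>)
    also have "\<dots> = c 1" using n by simp
    finally show ?thesis using H 1 by auto
  qed
  show "c m = 0"
  proof (cases "m = 1")
    case True then show ?thesis using c1 by simp
  next
    case False
    then have "m \<in> {2..n-1}" using m by auto
    from key[OF this, of 1] c1 show ?thesis by simp
  qed
qed

theorem corollary1:
  fixes n :: nat
  assumes "n \<ge> 2"
  shows "(\<forall>m\<in>{1..n-1}. polynomial_vfield n (Yf n n m))
       \<and> (\<forall>m\<in>{1..n-1}. commute n (ladder n) (Yf n n m))
       \<and> lin_indep_vfields n (n-1) (\<lambda>m. Yf n n m)
       \<and> (\<forall>a\<in>{1..n-1}. \<forall>b\<in>{1..n-1}. commute n (Yf n n a) (Yf n n b))"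
  using assms lin_indep[OF assms]
  by (auto simp: polynomial_vfield_def commute_def intro!: poly_Y bracket_ladder_Y bracket_Y_Y)

end
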